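(* Let $M$ be a globally hyperbolic developable conformally flat spacetime of dimension $n\ge3$ with developing map $D:M\to\widetilde{Ein}_{1,n-1}$. Then for every $p\in M$, $$I^-\big(D(I^-(p))\big)=I^-(D(p)),$$ where the left-hand side is the chronological past in $\widetilde{Ein}_{1,n-1}$ of the set $D(I^-(p))$.
   Context: $\widetilde{Ein}_{1,n-1}$ denotes the universal cover of the Einstein universe, conformally identified with $\mathbb{S}^{n-1}\times\mathbb{R}$ with the conformal class of $d\sigma^2-dt^2$, time-oriented by $\partial_t$. A conformally flat spacetime $M$ is developable if it admits a developing map: a conformal, time-orientation preserving local diffeomorphism $D:M\to\widetilde{Ein}_{1,n-1}$. *)

theory Defs
  imports "HOL-Analysis.Analysis"
begin

text \<open>Model of the universal cover of the Einstein universe: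
  S^{n-1} x R, with S^{n-1} the unit sphere of an n-dimensional Euclidean
  space 'a (n = DIM('a)), conformal class of d sigma^2 - dt^2,
  time orientation given by d/dt.\<close>

definition Ein :: "('a::euclidean_space \<times> real) set" where
  "Ein = {x. norm x = 1} \<times> UNIV"

definition Ein_top :: "('a::euclidean_space \<times> real) topology" where
  "Ein_top = subtopology euclidean Ein"

text \<open>Since x stays on the unit sphere, |x'| is the round-metric norm.\<close>

definition Ein_timelike_curve :: "(real \<Rightarrow> 'a::euclidean_space \<times> real) \<Rightarrow> bool" where
  "Ein_timelike_curve c \<longleftrightarrow>
     c ` {0..1} \<subseteq> Ein \<and> c piecewise_C1_differentiable_on {0..1} \<and>
     (\<exists>S. finite S \<and> c C1_differentiable_on ({0..1} - S) \<and>
        (\<forall>s\<in>{0..1} - S. norm (fst (vector_derivative c (at s)))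
                               < snd (vector_derivative c (at s))))"

definition Ein_causal_curve :: "(real \<Rightarrow> 'a::euclidean_space \<times> real) \<Rightarrow> bool" where
  "Ein_causal_curve c \<longleftrightarrow>
     c ` {0..1} \<subseteq> Ein \<and> c piecewise_C1_differentiable_on {0..1} \<and>
     (\<exists>S. finite S \<and> c C1_differentiable_on ({0..1} - S) \<and>
        (\<forall>s\<in>{0..1} - S. norm (fst (vector_derivative c (at s)))
                               \<le> snd (vector_derivative c (at s))
                         \<and> 0 < snd (vector_derivative c (at s))))"

definition Ein_chron_past :: "('a::euclidean_space \<times> real) set \<Rightarrow> ('a \<times> real) set" where
  "Ein_chron_past A = {y \<in> Ein. \<exists>a\<in>A. \<exists>c. Ein_timelike_curve c \<and> c 0 = y \<and> c 1 = a}"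

text \<open>The smooth structure, conformal Lorentzian structure and time
  orientation of M are exactly the pull-backs via D (D being a conformal,
  time-orientation preserving local diffeomorphism).\<close>

definition local_homeo_into :: "'m topology \<Rightarrow> ('m \<Rightarrow> 'b) \<Rightarrow> 'b topology \<Rightarrow> bool" where
  "local_homeo_into X D Y \<longleftrightarrow>
     D ` topspace X \<subseteq> topspace Y \<and>
     (\<forall>x\<in>topspace X. \<exists>U. openin X U \<and> x \<in> U \<and> openin Y (D ` U) \<and>
         homeomorphic_map (subtopology X U) (subtopology Y (D ` U)) D)"

definition developable_spacetime :: "'m topology \<Rightarrow> ('m \<Rightarrow> 'a::euclidean_space \<times> real) \<Rightarrow> bool" where
  "developable_spacetime X D \<longleftrightarrow>
     topspace X \<noteq> {} \<and> connected_space X \<and> Hausdorff_space X \<and> second_countable X \<and>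
     local_homeo_into X D Ein_top"

definition timelike_curve :: "'m topology \<Rightarrow> ('m \<Rightarrow> 'a::euclidean_space \<times> real) \<Rightarrow> (real \<Rightarrow> 'm) \<Rightarrow> bool" where
  "timelike_curve X D g \<longleftrightarrow>
     continuous_map (subtopology euclidean {0..1}) X g \<and> Ein_timelike_curve (D \<circ> g)"

definition causal_curve :: "'m topology \<Rightarrow> ('m \<Rightarrow> 'a::euclidean_space \<times> real) \<Rightarrow> (real \<Rightarrow> 'm) \<Rightarrow> bool" where
  "causal_curve X D g \<longleftrightarrow>
     continuous_map (subtopology euclidean {0..1}) X g \<and> Ein_causal_curve (D \<circ> g)"

definition chron_past :: "'m topology \<Rightarrow> ('m \<Rightarrow> 'a::euclidean_space \<times> real) \<Rightarrow> 'm \<Rightarrow> 'm set" where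
  "chron_past X D p = {q \<in> topspace X. \<exists>g. timelike_curve X D g \<and> g 0 = q \<and> g 1 = p}"

definition causal_future :: "'m topology \<Rightarrow> ('m \<Rightarrow> 'a::euclidean_space \<times> real) \<Rightarrow> 'm \<Rightarrow> 'm set" where
  "causal_future X D p = {q \<in> topspace X. q = p \<or> (\<exists>g. causal_curve X D g \<and> g 0 = p \<and> g 1 = q)}"

definition causal_past :: "'m topology \<Rightarrow> ('m \<Rightarrow> 'a::euclidean_space \<times> real) \<Rightarrow> 'm \<Rightarrow> 'm set" where
  "causal_past X D p = {q \<in> topspace X. q = p \<or> (\<exists>g. causal_curve X D g \<and> g 0 = q \<and> g 1 = p)}"

text \<open>Global hyperbolicity (Bernal--Sanchez form): causal (no closed causal
  curves) and all causal diamonds J^+(p) \<inter> J^-(q) compact.\<close>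
definition globally_hyperbolic :: "'m topology \<Rightarrow> ('m \<Rightarrow> 'a::euclidean_space \<times> real) \<Rightarrow> bool" where
  "globally_hyperbolic X D \<longleftrightarrow>
     (\<nexists>g. causal_curve X D g \<and> g 0 = g 1) \<and>
     (\<forall>p\<in>topspace X. \<forall>q\<in>topspace X. compactin X (causal_future X D p \<inter> causal_past X D q))"

end

theory Submission imports Defs begin
definition Pc :: "(real \<Rightarrow> 'a::euclidean_space \<times> real) \<Rightarrow> bool" where
 "Pc c \<longleftrightarrow> (\<exists>S. finite S \<and> c C1_differentiable_on ({0..1} - S) \<and>
        (\<forall>s\<in>{0..1} - S. norm (fst (vector_derivative c (at s)))
                               < snd (vector_derivative c (at s))))"
definition Qc :: "(real \<Rightarrow> 'a::euclidean_space \<times> real) \<Rightarrow> bool" where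
 "Qc c \<longleftrightarrow> (\<exists>S. finite S \<and> (\<forall>s\<in>{0..1} - S. \<exists>v. (c has_vector_derivative v) (at s) \<and> norm (fst v) < snd v))"

lemma timelike_iff: "Ein_timelike_curve c \<longleftrightarrow> c ` {0..1} \<subseteq> Ein \<and> continuous_on {0..1} c \<and> Pc c"
  unfolding Ein_timelike_curve_def Pc_def piecewise_C1_differentiable_on_def by blast

lemma P_Q: "Pc c \<Longrightarrow> Qc c"
  unfolding Pc_def Qc_def C1_differentiable_on_eq
  by (metis vector_derivative_works)

lemma Q_P: assumes "c piecewise_C1_differentiable_on {0..1}" "Qc c" shows "Pc c"
proof -
  obtain S0 where S0: "finite S0" "c C1_differentiable_on ({0..1} - S0)"
    using assms(1) unfolding piecewise_C1_differentiable_on_def by blast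
  obtain S1 where S1: "finite S1" "\<forall>s\<in>{0..1} - S1. \<exists>v. (c has_vector_derivative v) (at s) \<and> norm (fst v) < snd v"
    using assms(2) unfolding Qc_def by blast
  have "c C1_differentiable_on ({0..1} - (S0 \<union> S1))"
    by (rule C1_differentiable_on_subset[OF S0(2)]) auto
  moreover have "\<forall>s\<in>{0..1} - (S0 \<union> S1). norm (fst (vector_derivative c (at s))) < snd (vector_derivative c (at s))"
  proof
    fix s assume "s \<in> {0..1} - (S0 \<union> S1)"
    then obtain v where "(c has_vector_derivative v) (at s)" "norm (fst v) < snd v" using S1(2) by blast
    then show "norm (fst (vector_derivative c (at s))) < snd (vector_derivative c (at s))"
      using vector_derivative_at by metis
  qed
  ultimately show ?thesis unfolding Pc_def using S0 S1 by (metis finite_Un)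
qed

lemma P_cong: assumes "\<forall>s\<in>{0<..<1}. c s = d s" "Pc c" shows "Pc d"
proof -
  obtain S where S: "finite S" "c C1_differentiable_on ({0..1} - S)"
     "\<forall>s\<in>{0..1} - S. norm (fst (vector_derivative c (at s))) < snd (vector_derivative c (at s))"
    using assms(2) unfolding Pc_def by blast
  let ?S = "S \<union> {0,1}"
  have sub: "{0..1} - ?S \<subseteq> {0<..<1}" by auto
  have hd: "(d has_vector_derivative vector_derivative c (at s)) (at s)" if "s \<in> {0..1} - ?S" for s
  proof (rule has_vector_derivative_transform_within_open[of c _ _ "{0<..<1}"])
    show "(c has_vector_derivative vector_derivative c (at s)) (at s)"
      using S(2) that unfolding C1_differentiable_on_eq by (auto intro: vector_derivative_works[THEN iffD1])
  qed (use that assms(1) in auto)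
  have eq: "vector_derivative d (at s) = vector_derivative c (at s)" if "s \<in> {0..1} - ?S" for s
    using hd[OF that] vector_derivative_at by blast
  have "d C1_differentiable_on ({0..1} - ?S)"
    unfolding C1_differentiable_on_def
  proof (intro exI conjI ballI)
    show "continuous_on ({0..1} - ?S) (\<lambda>x. vector_derivative c (at x))"
      using C1_differentiable_on_subset[OF S(2), of "{0..1} - ?S"]
      unfolding C1_differentiable_on_eq by auto
  qed (rule hd)
  moreover have "\<forall>s\<in>{0..1} - ?S. norm (fst (vector_derivative d (at s))) < snd (vector_derivative d (at s))"
    using S(3) eq by auto
  ultimately show ?thesis unfolding Pc_def using S(1) by (metis finite_Un finite.intros)
qed

lemma aff_vd:
  fixes c :: "real \<Rightarrow> 'a::euclidean_space \<times> real"
  assumes "(c has_vector_derivative v) (at (mm* ss+bb))" "norm (fst v) < snd v" "mm > 0"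
  shows "((\<lambda>x. c (mm*x+bb)) has_vector_derivative (mm *\<^sub>R v)) (at ss) \<and> norm (fst (mm *\<^sub>R v)) < snd (mm *\<^sub>R v)"
proof
  have "((\<lambda>x. mm*x+bb) has_vector_derivative mm) (at ss)"
    unfolding has_real_derivative_iff_has_vector_derivative[symmetric]
    by (auto intro!: derivative_eq_intros)
  from vector_diff_chain_at[OF this, of c v] assms(1)
  show "((\<lambda>x. c (mm*x+bb)) has_vector_derivative (mm *\<^sub>R v)) (at ss)" by (simp add: o_def)
  show "norm (fst (mm *\<^sub>R v)) < snd (mm *\<^sub>R v)"
    using assms(2,3) by simp
qed

lemma Q_join: assumes "Qc c1" "Qc c2" shows "Qc (c1 +++ c2)"
proof -
  obtain S1 where S1: "finite S1" "\<forall>s\<in>{0..1} - S1. \<exists>v. (c1 has_vector_derivative v) (at s) \<and> norm (fst v) < snd v"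
    using assms(1) unfolding Qc_def by blast
  obtain S2 where S2: "finite S2" "\<forall>s\<in>{0..1} - S2. \<exists>v. (c2 has_vector_derivative v) (at s) \<and> norm (fst v) < snd v"
    using assms(2) unfolding Qc_def by blast
  let ?S = "{0,1/2,1} \<union> (\<lambda>x. x/2) ` S1 \<union> (\<lambda>x. (x+1)/2) ` S2"
  have "\<forall>s\<in>{0..1} - ?S. \<exists>v. ((c1 +++ c2) has_vector_derivative v) (at s) \<and> norm (fst v) < snd v"
  proof
    fix s assume s: "s \<in> {0..1} - ?S"
    show "\<exists>v. ((c1 +++ c2) has_vector_derivative v) (at s) \<and> norm (fst v) < snd v"
    proof (cases "s < 1/2")
      case True
      have "2* s \<notin> S1" proof
        assume "2* s \<in> S1" then have "(2* s)/2 \<in> (\<lambda>x. x/2) ` S1" by blast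
        then show False using s by auto
      qed
      then have "2* s \<in> {0..1} - S1" using s True by auto
      then obtain v where v: "(c1 has_vector_derivative v) (at (2* s+0))" "norm (fst v) < snd v"
        using S1(2) by fastforce
      from aff_vd[OF v] have h: "((\<lambda>x. c1 (2*x+0)) has_vector_derivative (2 *\<^sub>R v)) (at s)"
        and n: "norm (fst (2 *\<^sub>R v)) < snd (2 *\<^sub>R v)" by auto
      have "((c1 +++ c2) has_vector_derivative (2 *\<^sub>R v)) (at s)"
        by (rule has_vector_derivative_transform_within_open[OF h, of "{0<..<1/2}"])
           (use True s in \<open>auto simp: joinpaths_def\<close>)
      then show ?thesis using n by blast
    next
      case False
      then have s2: "s > 1/2" using s by auto
      have "2* s-1 \<notin> S2" proof
        assume "2* s-1 \<in> S2" then have "((2* s-1)+1)/2 \<in> (\<lambda>x. (x+1)/2) ` S2" by blast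
        then show False using s by auto
      qed
      then have "2* s-1 \<in> {0..1} - S2" using s s2 by auto
      then obtain v where v: "(c2 has_vector_derivative v) (at (2* s+(-1)))" "norm (fst v) < snd v"
        using S2(2) by fastforce
      from aff_vd[OF v] have h: "((\<lambda>x. c2 (2*x+(-1))) has_vector_derivative (2 *\<^sub>R v)) (at s)"
        and n: "norm (fst (2 *\<^sub>R v)) < snd (2 *\<^sub>R v)" by auto
      have "((c1 +++ c2) has_vector_derivative (2 *\<^sub>R v)) (at s)"
        by (rule has_vector_derivative_transform_within_open[OF h, of "{1/2<..<1}"])
           (use s2 s in \<open>auto simp: joinpaths_def\<close>)
      then show ?thesis using n by blast
    qed
  qed
  then show ?thesis unfolding Qc_def using S1(1) S2(1) by (metis finite_Un finite_imageI finite.intros)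
qed

lemma Q_subpath: assumes "Qc c" "0 \<le> u" "u < w" "w \<le> 1" shows "Qc (subpath u w c)"
proof -
  obtain S1 where S1: "finite S1" "\<forall>s\<in>{0..1} - S1. \<exists>v. (c has_vector_derivative v) (at s) \<and> norm (fst v) < snd v"
    using assms(1) unfolding Qc_def by blast
  let ?S = "{0,1} \<union> (\<lambda>x. (x-u)/(w-u)) ` S1"
  have "\<forall>s\<in>{0..1} - ?S. \<exists>v. (subpath u w c has_vector_derivative v) (at s) \<and> norm (fst v) < snd v"
  proof
    fix s assume s: "s \<in> {0..1} - ?S"
    have "(w-u)* s+u \<notin> S1" proof
      assume "(w-u)* s+u \<in> S1" then have "((w-u)* s+u-u)/(w-u) \<in> (\<lambda>x. (x-u)/(w-u)) ` S1" by blast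
      then show False using s assms by auto
    qed
    moreover have "(w-u)* s+u \<in> {0..1}"
    proof -
      have a: "(w-u)* s \<le> (w-u)*1" using s assms by (intro mult_left_mono) auto
      have b: "(w-u)* s \<ge> 0" using s assms by auto
      have c: "(w-u)* s + u \<le> 1" using a assms by (smt (verit))
      have d: "(w-u)* s + u \<ge> 0" using b assms by (smt (verit))
      show ?thesis using c d by simp
    qed
    ultimately have "(w-u)* s+u \<in> {0..1} - S1" by blast
    then obtain v where v: "(c has_vector_derivative v) (at ((w-u)* s+u))" "norm (fst v) < snd v"
      using S1(2) by fastforce
    have "w - u > 0" using assms by simp
    from aff_vd[OF v this] show "\<exists>v. (subpath u w c has_vector_derivative v) (at s) \<and> norm (fst v) < snd v"
      unfolding subpath_def by blast
  qed
  then show ?thesis unfolding Qc_def using S1(1) by (metis finite_Un finite_imageI finite.intros)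
qed

lemma timelike_join: assumes "Ein_timelike_curve c1" "Ein_timelike_curve c2" "c1 1 = c2 0"
  shows "Ein_timelike_curve (c1 +++ c2)"
proof -
  have v: "valid_path c1" "valid_path c2"
    using assms unfolding Ein_timelike_curve_def valid_path_def by auto
  have vj: "valid_path (c1 +++ c2)"
    by (rule valid_path_join[OF v]) (use assms(3) in \<open>simp add: pathfinish_def pathstart_def\<close>)
  have "path_image (c1 +++ c2) \<subseteq> Ein"
    using assms path_image_join_subset[of c1 c2] unfolding Ein_timelike_curve_def path_image_def by blast
  moreover have "Qc (c1 +++ c2)" using Q_join P_Q assms timelike_iff by metis
  ultimately show ?thesis using vj Q_P unfolding timelike_iff valid_path_def path_image_def
    by (auto simp: piecewise_C1_differentiable_on_def)
qed

lemma timelike_subpath: assumes "Ein_timelike_curve c" "0 \<le> u" "u < w" "w \<le> 1"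
  shows "Ein_timelike_curve (subpath u w c)"
proof -
  have v: "valid_path c"
    using assms unfolding Ein_timelike_curve_def valid_path_def by auto
  have vj: "valid_path (subpath u w c)"
    by (rule valid_path_subpath[OF v]) (use assms in auto)
  have "path_image (subpath u w c) \<subseteq> Ein"
    using assms path_image_subpath_subset[of u w c] unfolding Ein_timelike_curve_def path_image_def by auto
  moreover have "Qc (subpath u w c)" using Q_subpath P_Q assms timelike_iff by metis
  ultimately show ?thesis using vj Q_P unfolding timelike_iff valid_path_def path_image_def
    by (auto simp: piecewise_C1_differentiable_on_def)
qed

theorem lemma4p2:
  fixes X :: "'m topology" and D :: "'m \<Rightarrow> 'a::euclidean_space \<times> real"
  assumes "DIM('a) \<ge> 3"
    and "developable_spacetime X D"
    and "globally_hyperbolic X D"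
    and "p \<in> topspace X"
  shows "Ein_chron_past (D ` chron_past X D p) = Ein_chron_past {D p}"
proof
  show "Ein_chron_past (D ` chron_past X D p) \<subseteq> Ein_chron_past {D p}"
  proof
    fix y assume "y \<in> Ein_chron_past (D ` chron_past X D p)"
    then obtain q c where y: "y \<in> Ein" and q: "q \<in> chron_past X D p" and c: "Ein_timelike_curve c" "c 0 = y" "c 1 = D q"
      unfolding Ein_chron_past_def by blast
    then obtain g where g: "timelike_curve X D g" "g 0 = q" "g 1 = p"
      unfolding chron_past_def by blast
    have dg: "Ein_timelike_curve (D \<circ> g)" using g unfolding timelike_curve_def by blast
    have j: "Ein_timelike_curve (c +++ (D \<circ> g))"
      by (rule timelike_join[OF c(1) dg]) (use c g in simp)
    have "(c +++ (D \<circ> g)) 0 = y" "(c +++ (D \<circ> g)) 1 = D p"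
      using c g by (auto simp: joinpaths_def)
    then show "y \<in> Ein_chron_past {D p}" using y j unfolding Ein_chron_past_def by blast
  qed
next
  show "Ein_chron_past {D p} \<subseteq> Ein_chron_past (D ` chron_past X D p)"
  proof
    fix y assume "y \<in> Ein_chron_past {D p}"
    then obtain c where y: "y \<in> Ein" and c: "Ein_timelike_curve c" "c 0 = y" "c 1 = D p"
      unfolding Ein_chron_past_def by blast
    have lh: "local_homeo_into X D Ein_top" using assms(2) unfolding developable_spacetime_def by blast
    have topE: "topspace (Ein_top :: ('a \<times> real) topology) = Ein" unfolding Ein_top_def by simp
    obtain U where U: "openin X U" "p \<in> U" "openin Ein_top (D ` U)"
      "homeomorphic_map (subtopology X U) (subtopology Ein_top (D ` U)) D"
      using lh assms(4) unfolding local_homeo_into_def by blast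
    obtain h where h: "homeomorphic_maps (subtopology X U) (subtopology Ein_top (D ` U)) D h"
      using U(4) homeomorphic_map_maps by blast
    have DUE: "D ` U \<subseteq> Ein" using openin_subset[OF U(3)] topE by argo
    have tsU: "topspace (subtopology X U) = U" using openin_subset[OF U(1)] by auto
    have tsDU: "topspace (subtopology Ein_top (D ` U)) = D ` U" using DUE topE by auto
    have hc: "continuous_map (subtopology Ein_top (D ` U)) (subtopology X U) h"
      and hD: "\<And>z. z \<in> D ` U \<Longrightarrow> D (h z) = z"
      and Dh: "\<And>x. x \<in> U \<Longrightarrow> h (D x) = x"
      using h tsU tsDU unfolding homeomorphic_maps_def by auto
    obtain T where T: "open T" "D ` U = T \<inter> Ein"
      using U(3) unfolding Ein_top_def openin_subtopology by auto
    have cc: "continuous_on {0..1} c" and cE: "c ` {0..1} \<subseteq> Ein"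
      using c(1) unfolding timelike_iff by auto
    obtain A where A: "open A" "A \<inter> {0..1} = c -` T \<inter> {0..1}"
      using cc T(1) unfolding continuous_on_open_invariant by blast
    have "c 1 \<in> T" using c(3) U(2) T(2) by auto
    then have "(1::real) \<in> c -` T \<inter> {0..1}" by auto
    then have "1 \<in> A" using A(2) by blast
    then obtain e where e: "e > 0" "ball 1 e \<subseteq> A" using A(1) openE by blast
    define a where "a = max (1/2) (1 - e/2)"
    have a: "0 < a" "a < 1" using e unfolding a_def by auto
    have cin: "c s \<in> D ` U" if "s \<in> {a..1}" for s
    proof -
      have "s \<in> ball 1 e" using that e unfolding a_def by (auto simp: dist_real_def)
      then have "s \<in> A \<inter> {0..1}" using e that a by auto
      then have "c s \<in> T" using A(2) by auto
      moreover have "c s \<in> Ein" using cE that a by auto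
      ultimately show ?thesis using T(2) by auto
    qed
    let ?sp = "subpath a 1 c"
    have sp01: "?sp x \<in> D ` U" if "x \<in> {0..1}" for x
    proof -
      have "(1-a)*x \<le> (1-a)*1" using that a by (intro mult_left_mono) auto
      moreover have "(1-a)*x \<ge> 0" using that a by auto
      ultimately have "(1-a)*x + a \<in> {a..1}" by auto
      then show ?thesis using cin unfolding subpath_def by auto
    qed
    have spc: "continuous_on {0..1} ?sp"
      using path_subpath[of c a 1] cc a unfolding path_def by auto
    have spmap: "continuous_map (subtopology euclidean {0..1}) (subtopology Ein_top (D ` U)) ?sp"
      unfolding Ein_top_def subtopology_subtopology continuous_map_in_subtopology
      using spc sp01 cE DUE by (auto simp: continuous_map_iff_continuous)
    define g where "g = h \<circ> ?sp"
    have gmap: "continuous_map (subtopology euclidean {0..1}) X g"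
      unfolding g_def
      using continuous_map_compose[OF spmap hc] continuous_map_into_fulltopology by blast
    have Dg: "\<forall>x\<in>{0..1}. (D \<circ> g) x = ?sp x" using hD sp01 unfolding g_def by auto
    have spt: "Ein_timelike_curve ?sp" using timelike_subpath[OF c(1)] a by auto
    have "Ein_timelike_curve (D \<circ> g)"
      unfolding timelike_iff
    proof (intro conjI)
      show "(D \<circ> g) ` {0..1} \<subseteq> Ein" using Dg sp01 DUE by auto
      show "continuous_on {0..1} (D \<circ> g)" by (rule continuous_on_eq[OF spc]) (use Dg in auto)
      show "Pc (D \<circ> g)" using P_cong[of ?sp "D \<circ> g"] Dg spt unfolding timelike_iff by auto
    qed
    then have tg: "timelike_curve X D g" using gmap unfolding timelike_curve_def by blast
    have g1: "g 1 = p" using Dh[OF U(2)] c(3) unfolding g_def subpath_def by simp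
    have g0: "g 0 = h (c a)" unfolding g_def subpath_def by simp
    have ca: "c a \<in> topspace (subtopology Ein_top (D ` U))" using tsDU cin[of a] a by auto
    have "h (c a) \<in> topspace (subtopology X U)"
      using continuous_map_image_subset_topspace[OF hc] ca by blast
    then have "h (c a) \<in> U" using tsU by simp
    then have qX: "h (c a) \<in> topspace X" using tsU by auto
    have qin: "h (c a) \<in> chron_past X D p"
      unfolding chron_past_def using qX tg g0 g1 by blast
    have Dq: "D (h (c a)) = c a" using hD cin[of a] a by auto
    have st: "Ein_timelike_curve (subpath 0 a c)" using timelike_subpath[OF c(1)] a by auto
    have "subpath 0 a c 0 = y" "subpath 0 a c 1 = D (h (c a))" using c(2) Dq by (auto simp: subpath_def)
    then show "y \<in> Ein_chron_past (D ` chron_past X D p)"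
      unfolding Ein_chron_past_def using y st qin by blast
  qed
qed

end
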